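(* Let $V\in(\mathbb{R}\cup\{-\infty\})^{n\times p}$ have no row and no column identically equal to $-\infty$, and let $T$ be the operator $$T_i(x)=\inf_{k\in[p],\,(i,k)\in E}\Big[-V_{ik}+\max_{j\in[n],\,j\neq i}(V_{jk}+x_j)\Big],\qquad i\in[n],$$ with $E=\{(i,k): V_{ik}\neq-\infty\}$. Then for all $\lambda\in[-\infty,0]$ and all $a\in\mathbb{R}^n$, $$B(-a,-\lambda)\subset\operatorname{Col}(V)\iff T(a)\le \lambda+a.$$
   Context: $\mathbb{R}_{\max}=\mathbb{R}\cup\{-\infty\}$, with $-\infty+c=-\infty$ and the maximum of an empty family equal to $-\infty$; $\lambda+a$ denotes $(\lambda+a_i)_i$ (so $-\infty+a$ is the identically $-\infty$ vector). $\operatorname{Col}(V)=\{Vx:x\in\mathbb{R}_{\max}^p\}$ with $(Vx)_i=\max_k(V_{ik}+x_k)$. Hilbert's projective metric: $d(x,y)=\inf\{\lambda-\mu:\lambda,\mu\in\mathbb{R},\ \mu+y_i\le x_i\le\lambda+y_i\ \forall i\}\in[0,+\infty]$. For $c\in\mathbb{R}^n$ and $r\in[0,+\infty]$, $B(c,r)=\{x\in\mathbb{R}_{\max}^n: d(c,x)\le r\}$ (so $B(c,+\infty)=\mathbb{R}^n$). *)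

theory Defs
  imports "HOL-Analysis.Analysis" "HOL-Library.Extended_Real"
begin

text \<open>Max-plus semiring R_max = R \<union> {-\<infinity>}, modelled inside ereal as values \<noteq> \<infinity>.
The maximum of an empty family is Sup {} = -\<infinity>.\<close>

definition rmax_vec :: "('n \<Rightarrow> ereal) \<Rightarrow> bool" where
  "rmax_vec x \<longleftrightarrow> (\<forall>i. x i \<noteq> \<infinity>)"

definition rmax_mat :: "('n \<Rightarrow> 'p \<Rightarrow> ereal) \<Rightarrow> bool" where
  "rmax_mat V \<longleftrightarrow> (\<forall>i k. V i k \<noteq> \<infinity>)"

definition mp_mult :: "('n \<Rightarrow> 'p::finite \<Rightarrow> ereal) \<Rightarrow> ('p \<Rightarrow> ereal) \<Rightarrow> 'n \<Rightarrow> ereal" where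
  "mp_mult V x = (\<lambda>i. SUP k. V i k + x k)"

definition Col :: "('n \<Rightarrow> 'p::finite \<Rightarrow> ereal) \<Rightarrow> ('n \<Rightarrow> ereal) set" where
  "Col V = {mp_mult V x | x. rmax_vec x}"

text \<open>Hilbert's projective metric, value in [0,+\<infinity>] (Inf {} = +\<infinity>).\<close>
definition hilbert_d :: "('n \<Rightarrow> ereal) \<Rightarrow> ('n \<Rightarrow> ereal) \<Rightarrow> ereal" where
  "hilbert_d x y = Inf {ereal (l - m) | l m :: real.
      \<forall>i. ereal m + y i \<le> x i \<and> x i \<le> ereal l + y i}"

text \<open>Ball B(c,r) for c real and r \<in> [0,+\<infinity>]; following the convention
B(c,+\<infinity>) = R^n, the ball consists of finite vectors (for finite r this is automatic).\<close>
definition hball :: "('n \<Rightarrow> real) \<Rightarrow> ereal \<Rightarrow> ('n \<Rightarrow> ereal) set" where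
  "hball c r = {x. (\<forall>i. x i \<noteq> \<infinity> \<and> x i \<noteq> -\<infinity>) \<and> hilbert_d (\<lambda>i. ereal (c i)) x \<le> r}"

definition opT :: "('n \<Rightarrow> 'p \<Rightarrow> ereal) \<Rightarrow> ('n \<Rightarrow> ereal) \<Rightarrow> 'n \<Rightarrow> ereal" where
  "opT V x = (\<lambda>i. INF k \<in> {k. V i k \<noteq> -\<infinity>}.
       - V i k + (SUP j \<in> {j. j \<noteq> i}. V j k + x j))"

end

theory Submission
  imports Defs
begin

lemma Sup_att:
  fixes f :: "'a \<Rightarrow> ereal"
  assumes "finite A" "A \<noteq> {}"
  shows "\<exists>k\<in>A. (SUP x\<in>A. f x) = f k"
proof -
  have "Sup (f ` A) \<in> f ` A"
    by (rule finite_Sup_in) (use assms in \<open>auto simp: sup_max max_def\<close>)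
  then show ?thesis by auto
qed

lemma Inf_att:
  fixes f :: "'a \<Rightarrow> ereal"
  assumes "finite A" "A \<noteq> {}"
  shows "\<exists>k\<in>A. (INF x\<in>A. f x) = f k"
proof -
  have "Inf (f ` A) \<in> f ` A"
    by (rule finite_Inf_in) (use assms in \<open>auto simp: inf_min min_def\<close>)
  then show ?thesis by auto
qed

lemma hd_lower:
  fixes c xr :: "'n \<Rightarrow> real"
  shows "ereal ((c j - xr j) - (c i - xr i)) \<le> hilbert_d (\<lambda>i. ereal (c i)) (\<lambda>i. ereal (xr i))"
  unfolding hilbert_d_def
proof (rule Inf_greatest, clarsimp)
  fix l m :: real
  assume h: "\<forall>i. m + xr i \<le> c i \<and> c i \<le> l + xr i"
  from h[rule_format, of i] h[rule_format, of j]
  show "c j - xr j - (c i - xr i) \<le> l - m" by linarith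
qed

lemma hd_upper:
  fixes c xr :: "'n \<Rightarrow> real"
  assumes "\<forall>i. m + xr i \<le> c i \<and> c i \<le> l + xr i"
  shows "hilbert_d (\<lambda>i. ereal (c i)) (\<lambda>i. ereal (xr i)) \<le> ereal (l - m)"
  unfolding hilbert_d_def
  by (rule Inf_lower) (use assms in auto)

lemma col_suff:
  fixes V :: "'n \<Rightarrow> 'p::finite \<Rightarrow> ereal" and xr :: "'n \<Rightarrow> real"
  assumes rm: "rmax_mat V" and col: "\<forall>k. \<exists>i. V i k \<noteq> -\<infinity>"
    and h: "\<forall>i. \<exists>k. V i k \<noteq> -\<infinity> \<and> (\<forall>j. V j k + ereal (xr i) \<le> V i k + ereal (xr j))"
  shows "(\<lambda>i. ereal (xr i)) \<in> Col V"
proof -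
  define z where "z k = (INF j. ereal (xr j) - V j k)" for k
  have zfin: "z k \<noteq> \<infinity>" for k
  proof -
    obtain j where j: "V j k \<noteq> -\<infinity>" using col by blast
    then obtain w where w: "V j k = ereal w" using rm unfolding rmax_mat_def
      by (cases "V j k") auto
    have "z k \<le> ereal (xr j) - V j k" unfolding z_def by (rule INF_lower) simp
    then show ?thesis using w by auto
  qed
  have "mp_mult V z = (\<lambda>i. ereal (xr i))"
  proof
    fix i
    show "mp_mult V z i = ereal (xr i)"
      unfolding mp_mult_def
    proof (rule antisym)
      show "(SUP k. V i k + z k) \<le> ereal (xr i)"
      proof (rule SUP_least)
        fix k
        show "V i k + z k \<le> ereal (xr i)"
        proof (cases "V i k = -\<infinity>")
          case True then show ?thesis using zfin[of k] by (cases "z k") auto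
        next
          case False
          then obtain v where v: "V i k = ereal v" using rm unfolding rmax_mat_def
            by (cases "V i k") auto
          have "z k \<le> ereal (xr i) - V i k" unfolding z_def by (rule INF_lower) simp
          then show ?thesis using v by (cases "z k") auto
        qed
      qed
    next
      obtain k where k: "V i k \<noteq> -\<infinity>" "\<forall>j. V j k + ereal (xr i) \<le> V i k + ereal (xr j)"
        using h by blast
      then obtain v where v: "V i k = ereal v" using rm unfolding rmax_mat_def
        by (cases "V i k") auto
      have "ereal (xr i - v) \<le> z k" unfolding z_def
      proof (rule INF_greatest)
        fix j
        show "ereal (xr i - v) \<le> ereal (xr j) - V j k"
        proof (cases "V j k = -\<infinity>")
          case True then show ?thesis by simp
        next
          case False
          then obtain w where w: "V j k = ereal w" using rm unfolding rmax_mat_def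
            by (cases "V j k") auto
          from k(2)[rule_format, of j] show ?thesis using v w by simp
        qed
      qed
      then have "V i k + ereal (xr i - v) \<le> V i k + z k" by (rule add_left_mono)
      then have "ereal (xr i) \<le> V i k + z k" using v by simp
      also have "\<dots> \<le> (SUP k. V i k + z k)" by (rule SUP_upper) simp
      finally show "ereal (xr i) \<le> (SUP k. V i k + z k)" .
    qed
  qed
  moreover have "rmax_vec z" unfolding rmax_vec_def using zfin by blast
  ultimately show ?thesis unfolding Col_def by (auto intro!: exI[where x=z])
qed

lemma col_nec:
  fixes V :: "'n \<Rightarrow> 'p::finite \<Rightarrow> ereal" and xr :: "'n \<Rightarrow> real"
  assumes rm: "rmax_mat V" and x: "(\<lambda>i. ereal (xr i)) \<in> Col V"
  shows "\<exists>k. V i k \<noteq> -\<infinity> \<and> (\<forall>j. V j k + ereal (xr i) \<le> V i k + ereal (xr j))"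
proof -
  obtain z where z: "rmax_vec z" "(\<lambda>i. ereal (xr i)) = mp_mult V z"
    using x unfolding Col_def by blast
  have eq: "(SUP k. V j k + z k) = ereal (xr j)" for j
    using fun_cong[OF z(2), of j] unfolding mp_mult_def by simp
  obtain k where k: "(SUP k. V i k + z k) = V i k + z k"
    using Sup_att[of "UNIV :: 'p set" "\<lambda>k. V i k + z k"] by auto
  have zk: "z k \<noteq> \<infinity>" using z(1) unfolding rmax_vec_def by blast
  have vk: "V i k \<noteq> \<infinity>" using rm unfolding rmax_mat_def by blast
  have s: "V i k + z k = ereal (xr i)" using k eq[of i] by simp
  then obtain v t where vt: "V i k = ereal v" "z k = ereal t"
    using zk vk s by (cases "V i k"; cases "z k") auto
  have "V j k + ereal (xr i) \<le> V i k + ereal (xr j)" for j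
  proof (cases "V j k = -\<infinity>")
    case True then show ?thesis by simp
  next
    case False
    then obtain w where w: "V j k = ereal w" using rm unfolding rmax_mat_def
      by (cases "V j k") auto
    have "V j k + z k \<le> (SUP k. V j k + z k)" by (rule SUP_upper) simp
    then have "w + t \<le> xr j" using eq[of j] w vt by simp
    moreover have "v + t = xr i" using s vt by simp
    ultimately show ?thesis using w vt by simp
  qed
  moreover have "V i k \<noteq> -\<infinity>" using vt by simp
  ultimately show ?thesis by blast
qed

lemma ereal_aux: "- ereal v + S \<le> L \<longleftrightarrow> S \<le> L + ereal v"
  by (cases S; cases L) auto

lemma opT_iff:
  fixes V :: "'n \<Rightarrow> 'p::finite \<Rightarrow> ereal" and a :: "'n \<Rightarrow> real"
  assumes rm: "rmax_mat V" and ex: "\<exists>k. V i k \<noteq> -\<infinity>"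
  shows "opT V (\<lambda>j. ereal (a j)) i \<le> L \<longleftrightarrow>
    (\<exists>k. V i k \<noteq> -\<infinity> \<and> (\<forall>j. j \<noteq> i \<longrightarrow> V j k + ereal (a j) \<le> L + V i k))"
proof -
  define g where "g k = - V i k + (SUP j \<in> {j. j \<noteq> i}. V j k + ereal (a j))" for k
  have o: "opT V (\<lambda>j. ereal (a j)) i = (INF k \<in> {k. V i k \<noteq> -\<infinity>}. g k)"
    unfolding opT_def g_def by simp
  have gi: "g k \<le> L \<longleftrightarrow> (\<forall>j. j \<noteq> i \<longrightarrow> V j k + ereal (a j) \<le> L + V i k)"
    if vk: "V i k \<noteq> -\<infinity>" for k
  proof -
    obtain v where v: "V i k = ereal v" using rm vk unfolding rmax_mat_def
      by (cases "V i k") auto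
    show ?thesis unfolding g_def v ereal_aux by (auto simp: SUP_le_iff)
  qed
  show ?thesis
  proof
    assume "opT V (\<lambda>j. ereal (a j)) i \<le> L"
    moreover obtain k where "k \<in> {k. V i k \<noteq> -\<infinity>}" "(INF k \<in> {k. V i k \<noteq> -\<infinity>}. g k) = g k"
      using Inf_att[of "{k. V i k \<noteq> -\<infinity>}" g] ex by auto
    ultimately show "\<exists>k. V i k \<noteq> -\<infinity> \<and> (\<forall>j. j \<noteq> i \<longrightarrow> V j k + ereal (a j) \<le> L + V i k)"
      using o gi by auto
  next
    assume "\<exists>k. V i k \<noteq> -\<infinity> \<and> (\<forall>j. j \<noteq> i \<longrightarrow> V j k + ereal (a j) \<le> L + V i k)"
    then obtain k where k: "V i k \<noteq> -\<infinity>" "g k \<le> L" using gi by blast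
    have "(INF k \<in> {k. V i k \<noteq> -\<infinity>}. g k) \<le> g k" by (rule INF_lower) (use k in simp)
    then show "opT V (\<lambda>j. ereal (a j)) i \<le> L" using o k by simp
  qed
qed



lemma ball_pt:
  fixes V :: "'n::finite \<Rightarrow> 'p::finite \<Rightarrow> ereal" and a :: "'n \<Rightarrow> real"
  assumes rm: "rmax_mat V" and sub: "hball (\<lambda>i. - a i) (- lam) \<subseteq> Col V"
    and r0: "0 \<le> r" and rl: "ereal r \<le> - lam"
  shows "\<exists>k. V i k \<noteq> -\<infinity> \<and> (\<forall>j. j \<noteq> i \<longrightarrow> V j k + ereal (r - a i) \<le> V i k + ereal (- a j))"
proof -
  define xr where "xr j = - a j + (if j = i then r else 0)" for j
  have "hilbert_d (\<lambda>j. ereal (- a j)) (\<lambda>j. ereal (xr j)) \<le> ereal (0 - (- r))"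
    by (rule hd_upper) (use r0 in \<open>auto simp: xr_def\<close>)
  then have "(\<lambda>j. ereal (xr j)) \<in> hball (\<lambda>i. - a i) (- lam)"
    unfolding hball_def using rl by auto
  then have "(\<lambda>j. ereal (xr j)) \<in> Col V" using sub by blast
  from col_nec[OF rm this, of i] obtain k where
    k: "V i k \<noteq> -\<infinity>" "\<forall>j. V j k + ereal (xr i) \<le> V i k + ereal (xr j)" by blast
  have "V j k + ereal (r - a i) \<le> V i k + ereal (- a j)" if "j \<noteq> i" for j
    using k(2)[rule_format, of j] that by (simp add: xr_def)
  with k(1) show ?thesis by blast
qed

theorem lemma3p4:
  fixes V :: "'n::finite \<Rightarrow> 'p::finite \<Rightarrow> ereal"
    and lam :: ereal and a :: "'n \<Rightarrow> real"
  assumes "rmax_mat V"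
    and "\<forall>i. \<exists>k. V i k \<noteq> -\<infinity>"
    and "\<forall>k. \<exists>i. V i k \<noteq> -\<infinity>"
    and "lam \<le> 0"
  shows "hball (\<lambda>i. - a i) (- lam) \<subseteq> Col V \<longleftrightarrow>
         (\<forall>i. opT V (\<lambda>j. ereal (a j)) i \<le> lam + ereal (a i))"
proof
  assume sub: "hball (\<lambda>i. - a i) (- lam) \<subseteq> Col V"
  show "\<forall>i. opT V (\<lambda>j. ereal (a j)) i \<le> lam + ereal (a i)"
  proof
    fix i
    have goal: "\<exists>k. V i k \<noteq> -\<infinity> \<and> (\<forall>j. j \<noteq> i \<longrightarrow> V j k + ereal (a j) \<le> lam + ereal (a i) + V i k)"
    proof (cases lam)
      case (real l)
      have "0 \<le> - l" using assms(4) real by simp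
      from ball_pt[OF assms(1) sub this, of i] obtain k where
        k: "V i k \<noteq> -\<infinity>" "\<forall>j. j \<noteq> i \<longrightarrow> V j k + ereal (- l - a i) \<le> V i k + ereal (- a j)"
        using real by auto
      obtain v where v: "V i k = ereal v" using assms(1) k(1) unfolding rmax_mat_def
        by (cases "V i k") auto
      have "V j k + ereal (a j) \<le> lam + ereal (a i) + V i k" if "j \<noteq> i" for j
      proof (cases "V j k")
        case (real w)
        then show ?thesis using k(2)[rule_format, OF that] v \<open>lam = ereal l\<close> by simp
      qed (use assms(1) in \<open>auto simp: rmax_mat_def\<close>)
      with k(1) show ?thesis by blast
    next
      case PInf then show ?thesis using assms(4) by simp
    next
      case MInf
      define f where "f jk = real_of_ereal (V i (snd jk)) + a i - real_of_ereal (V (fst jk) (snd jk)) - a (fst jk)" for jk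
      define r where "r = max 0 (Max (range f)) + 1"
      have "0 \<le> r" unfolding r_def by simp
      from ball_pt[OF assms(1) sub this, of i] obtain k where
        k: "V i k \<noteq> -\<infinity>" "\<forall>j. j \<noteq> i \<longrightarrow> V j k + ereal (r - a i) \<le> V i k + ereal (- a j)"
        using MInf by auto
      obtain v where v: "V i k = ereal v" using assms(1) k(1) unfolding rmax_mat_def
        by (cases "V i k") auto
      have "V j k = -\<infinity>" if "j \<noteq> i" for j
      proof (rule ccontr)
        assume "V j k \<noteq> -\<infinity>"
        then obtain w where w: "V j k = ereal w" using assms(1) unfolding rmax_mat_def
          by (cases "V j k") auto
        have "r \<le> v + a i - w - a j" using k(2)[rule_format, OF that] v w by simp
        also have "\<dots> = f (j, k)" unfolding f_def using v w by simp
        also have "\<dots> \<le> Max (range f)" by (rule Max_ge) auto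
        finally show False unfolding r_def by simp
      qed
      with k(1) show ?thesis by auto
    qed
    show "opT V (\<lambda>j. ereal (a j)) i \<le> lam + ereal (a i)"
      using opT_iff[OF assms(1), of i a "lam + ereal (a i)"] assms(2) goal by blast
  qed
next
  assume rhs: "\<forall>i. opT V (\<lambda>j. ereal (a j)) i \<le> lam + ereal (a i)"
  show "hball (\<lambda>i. - a i) (- lam) \<subseteq> Col V"
  proof
    fix x assume x: "x \<in> hball (\<lambda>i. - a i) (- lam)"
    define xr where "xr i = real_of_ereal (x i)" for i
    have fin: "\<forall>i. x i \<noteq> \<infinity> \<and> x i \<noteq> -\<infinity>" using x unfolding hball_def by simp
    have xe: "x = (\<lambda>i. ereal (xr i))"
    proof
      fix i show "x i = ereal (xr i)" using fin unfolding xr_def by (cases "x i") auto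
    qed
    have "hilbert_d (\<lambda>i. ereal (- a i)) x \<le> - lam" using x unfolding hball_def by simp
    then have hd: "hilbert_d (\<lambda>i. ereal (- a i)) (\<lambda>i. ereal (xr i)) \<le> - lam"
      by (simp only: xe)
    have key: "\<exists>k. V i k \<noteq> -\<infinity> \<and> (\<forall>j. V j k + ereal (xr i) \<le> V i k + ereal (xr j))" for i
    proof -
      obtain k where k: "V i k \<noteq> -\<infinity>"
        "\<forall>j. j \<noteq> i \<longrightarrow> V j k + ereal (a j) \<le> lam + ereal (a i) + V i k"
        using opT_iff[OF assms(1), of i a "lam + ereal (a i)"] assms(2) rhs by blast
      obtain v where v: "V i k = ereal v" using assms(1) k(1) unfolding rmax_mat_def
        by (cases "V i k") auto
      have "V j k + ereal (xr i) \<le> V i k + ereal (xr j)" for j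
      proof (cases "j = i")
        case True then show ?thesis by simp
      next
        case ne: False
        show ?thesis
        proof (cases "V j k")
          case (real w)
          have h1: "ereal w + ereal (a j) \<le> lam + ereal (a i) + ereal v"
            using k(2)[rule_format, OF ne] real v by simp
          have h2: "ereal ((- a j - xr j) - (- a i - xr i)) \<le> - lam"
            using hd_lower[where c="\<lambda>i. - a i" and xr=xr and j=j and i=i] hd by (metis (no_types, lifting) order_trans)
          show ?thesis
          proof (cases lam)
            case (real l)
            then show ?thesis using h1 h2 v \<open>V j k = ereal w\<close> by simp
          next
            case PInf then show ?thesis using assms(4) by simp
          next
            case MInf then show ?thesis using h1 by simp
          qed
        qed (use assms(1) in \<open>auto simp: rmax_mat_def\<close>)
      qed
      with k(1) show ?thesis by blast
    qed
    show "x \<in> Col V" unfolding xe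
      by (rule col_suff[OF assms(1) assms(3)]) (use key in blast)
  qed
qed

end
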